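(* Let $m\in\mathbb N$ and, for every $n\in\mathbb N$, let $\nu_n:[0,1)\to\mathbb R$ be measurable with respect to $\mathcal J^m$. Then for every $u\in\mathbb N_0$ the random variables $\big(\nu_n\circ\tau_B^{\,u+(n-1)m}\big)_{n\in\mathbb N}$ are mutually independent with respect to Lebesgue measure $\lambda$ on $[0,1)$.
   Context: Let $\tau(x)=2x\bmod1$ on $[0,1)$, $B=[1/2,1)$, $\phi(x)=\inf\{n\in\mathbb N_0:\tau^nx\in B\}+1$ and $\tau_Bx=\tau^{\phi(x)}x$ (defined $\lambda$-a.e.). For $m\in\mathbb N$, $j\in\mathbb N_0$ and $i\in\{0,\dots,2^{m-1}-1\}$ let $J^m_{j,i}=\big[2^{-j}-(i+1)2^{-(j+m)},\,2^{-j}-i\,2^{-(j+m)}\big)$; for fixed $m$ these intervals partition $(0,1)$, and $\mathcal J^m$ denotes the $\sigma$-algebra they generate. *)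

theory Defs
  imports "HOL-Probability.Probability"
begin

definition tau :: "real \<Rightarrow> real" where
  "tau x = frac (2 * x)"

definition Bset :: "real set" where
  "Bset = {1/2..<1}"

text \<open>First entry time (plus one) into B. On the null set of points that never enter B
  (x = 0 and dyadic rationals) the value is an arbitrary convention (here 0, so tau_B is the identity there).\<close>
definition phi :: "real \<Rightarrow> nat" where
  "phi x = (if \<exists>n. (tau ^^ n) x \<in> Bset then (LEAST n. (tau ^^ n) x \<in> Bset) + 1 else 0)"

definition tauB :: "real \<Rightarrow> real" where
  "tauB x = (tau ^^ phi x) x"

definition Jint :: "nat \<Rightarrow> nat \<Rightarrow> nat \<Rightarrow> real set" where
  "Jint m j i = {(1/2)^j - (real i + 1) * (1/2)^(j+m) ..< (1/2)^j - real i * (1/2)^(j+m)}"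

definition Jalg :: "nat \<Rightarrow> real measure" where
  "Jalg m = sigma {0..<1} {Jint m j i | j i. i < 2^(m-1)}"

definition lambda01 :: "real measure" where
  "lambda01 = restrict_space lborel {0..<1}"

end

theory Submission
  imports Defs
begin

lemma tau_pow_small:
  assumes "0 \<le> x" "2^j * x < (1::real)" "n \<le> j"
  shows "(tau^^n) x = 2^n * x"
  using assms(3)
proof (induction n)
  case 0 then show ?case by simp
next
  case (Suc n)
  have "(2::real)^(Suc n) \<le> 2^j" using Suc.prems by (intro power_increasing) auto
  then have "2^(Suc n) * x \<le> 2^j * x" using assms(1) by (intro mult_right_mono) auto
  then have lt: "2^(Suc n) * x < 1" using assms(2) by linarith
  have "(tau^^Suc n) x = tau (2^n * x)" using Suc by simp
  also have "\<dots> = frac (2^(Suc n) * x)" by (simp add: tau_def mult.assoc)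
  also have "\<dots> = 2^(Suc n) * x" using lt assms(1) by (subst frac_eq) auto
  finally show ?case .
qed

lemma tauB_Ij:
  assumes "1 \<le> 2^(Suc j) * x" "2^j * x < (1::real)"
  shows "phi x = Suc j" "tauB x = 2^(Suc j) * x - 1"
proof -
  have x0: "0 \<le> x"
  proof (rule ccontr)
    assume "\<not> 0 \<le> x"
    then have "2^(Suc j) * x < 0" by (simp add: mult_pos_neg)
    then show False using assms(1) by linarith
  qed
  have eq: "\<And>n. n \<le> j \<Longrightarrow> (tau^^n) x = 2^n * x" using tau_pow_small[OF x0 assms(2)] by blast
  have inj: "(tau^^j) x \<in> Bset" using eq[of j] assms by (auto simp: Bset_def)
  have notin: "(tau^^n) x \<notin> Bset" if "n < j" for n
  proof -
    have "(2::real)^(Suc n) \<le> 2^j" using that by (intro power_increasing) auto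
    then have "2^(Suc n) * x \<le> 2^j * x" using x0 by (intro mult_right_mono) auto
    then have "2^n * x < 1/2" using assms(2) by simp
    then show ?thesis using eq[of n] that by (auto simp: Bset_def)
  qed
  have L: "(LEAST n. (tau^^n) x \<in> Bset) = j"
    by (rule Least_equality) (use inj notin not_le in auto)
  show ph: "phi x = Suc j" unfolding phi_def using inj L by auto
  have "tauB x = tau ((tau^^j) x)" unfolding tauB_def ph by simp
  also have "\<dots> = frac (2^(Suc j) * x)" using eq[of j] by (simp add: tau_def mult.assoc)
  also have "\<dots> = 2^(Suc j) * x - 1"
  proof -
    have "2^(Suc j) * x < 2" using assms(2) by simp
    then have "\<lfloor>2^(Suc j) * x\<rfloor> = 1" using assms(1) by (simp add: floor_eq_iff)
    then show ?thesis by (simp add: frac_def)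
  qed
  finally show "tauB x = 2^(Suc j) * x - 1" .
qed

lemma cover:
  assumes "0 < x" "x < (1::real)"
  shows "\<exists>j. 1 \<le> 2^(Suc j) * x \<and> 2^j * x < 1"
proof -
  obtain n where n: "1/x < 2^n" using real_arch_pow[of 2 "1/x"] by auto
  then have ex: "1 \<le> 2^n * x" using assms by (simp add: field_simps)
  define k where "k = (LEAST n. 1 \<le> (2::real)^n * x)"
  have k1: "1 \<le> 2^k * x" unfolding k_def by (rule LeastI[of _ n]) (rule ex)
  have "k \<noteq> 0" proof assume "k = 0" then show False using k1 assms by simp qed
  then obtain j where kj: "k = Suc j" by (cases k) auto
  have "\<not> 1 \<le> 2^j * x" using not_less_Least[of j "\<lambda>n. 1 \<le> (2::real)^n * x"] kj k_def by auto
  then show ?thesis using k1 kj by auto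
qed

lemma tau_pow_zero: "(tau^^n) 0 = 0"
  by (induction n) (auto simp: tau_def)

lemma tauB0: "tauB 0 = 0"
proof -
  have "phi 0 = 0" unfolding phi_def by (auto simp: tau_pow_zero Bset_def)
  then show ?thesis by (simp add: tauB_def)
qed

lemma tauB_upper: "1/2 \<le> x \<Longrightarrow> x < 1 \<Longrightarrow> tauB x = 2 * x - 1"
  using tauB_Ij(2)[of 0 x] by simp

lemma tauB_half:
  assumes "0 \<le> x" "x < 1/2"
  shows "tauB x = tauB (2 * x)"
proof (cases "x = 0")
  case True then show ?thesis by simp
next
  case False
  then obtain j where j: "1 \<le> 2^(Suc j) * x" "2^j * x < 1" using cover[of x] assms by auto
  have "j \<noteq> 0" proof assume "j = 0" then show False using j assms by simp qed
  then obtain i where ij: "j = Suc i" by (cases j) auto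
  have a: "1 \<le> 2^(Suc i) * (2 * x)" "2^i * (2*x) < 1" using j ij by (simp_all add: mult.assoc)
  show ?thesis using tauB_Ij(2)[OF a] tauB_Ij(2)[OF j] ij by (simp add: mult.assoc)
qed

lemma tauB_range:
  assumes "0 \<le> x" "x < 1"
  shows "0 \<le> tauB x \<and> tauB x < 1"
proof (cases "x = 0")
  case True then show ?thesis by (simp add: tauB0)
next
  case False
  then obtain j where j: "1 \<le> 2^(Suc j) * x" "2^j * x < 1" using cover[of x] assms by auto
  show ?thesis using tauB_Ij(2)[OF j] j by simp
qed

abbreviation "Om \<equiv> {0..<1::real}"

lemma space_L: "space lambda01 = Om"
  by (simp add: lambda01_def)

lemma sets_L: "A \<in> sets lambda01 \<longleftrightarrow> A \<subseteq> Om \<and> A \<in> sets borel"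
  unfolding lambda01_def by (subst sets_restrict_space_iff) auto

lemma measure_L: "A \<in> sets lambda01 \<Longrightarrow> measure lambda01 A = measure lborel A"
  unfolding lambda01_def by (rule measure_restrict_space) (auto simp: sets_L[unfolded lambda01_def])

lemma prob_L: "prob_space lambda01"
proof
  have "emeasure lambda01 (space lambda01) = emeasure lborel Om"
    unfolding lambda01_def by (subst emeasure_restrict_space) auto
  then show "emeasure lambda01 (space lambda01) = 1" by simp
qed

lemma affine_borel:
  fixes c d :: real
  assumes "S \<in> sets borel" "c > 0"
  shows "{x. c * x + d \<in> S} \<in> sets borel"
        "measure lborel {x. c * x + d \<in> S} = measure lborel S / c"
proof -
  have m: "(\<lambda>x::real. c * x + d) \<in> borel_measurable borel" by simp
  show b: "{x. c * x + d \<in> S} \<in> sets borel"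
    using measurable_sets[OF m assms(1)] by (simp add: vimage_def)
  have eq: "{x. c * x + d \<in> S} = (\<lambda>y. (1/c) *\<^sub>R y + (- d / c)) ` S"
  proof (rule set_eqI, rule iffI)
    fix x assume "x \<in> {x. c * x + d \<in> S}"
    then show "x \<in> (\<lambda>y. (1/c) *\<^sub>R y + (- d / c)) ` S"
      using assms(2) by (intro image_eqI[of _ _ "c * x + d"]) (auto simp: field_simps)
  next
    fix x assume "x \<in> (\<lambda>y. (1/c) *\<^sub>R y + (- d / c)) ` S"
    then show "x \<in> {x. c * x + d \<in> S}" using assms(2) by (auto simp: field_simps)
  qed
  have "measure lebesgue ((\<lambda>y. (1/c) *\<^sub>R y + (- d / c)) ` S) = \<bar>1/c\<bar> ^ DIM(real) * measure lebesgue S"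
    by (rule measure_lebesgue_affine)
  then have "measure lebesgue {x. c * x + d \<in> S} = measure lebesgue S / c"
    using assms(2) by (simp add: eq)
  then show "measure lborel {x. c * x + d \<in> S} = measure lborel S / c"
    using assms b by simp
qed

lemma affine_L:
  fixes c d :: real
  assumes "S \<in> sets lambda01" "c > 0" "{x. c * x + d \<in> S} \<subseteq> Om"
  shows "{x. c * x + d \<in> S} \<in> sets lambda01"
        "measure lambda01 {x. c * x + d \<in> S} = measure lambda01 S / c"
proof -
  have S: "S \<in> sets borel" using assms(1) sets_L by auto
  show s: "{x. c * x + d \<in> S} \<in> sets lambda01" using affine_borel(1)[OF S assms(2)] assms(3) sets_L by auto
  show "measure lambda01 {x. c * x + d \<in> S} = measure lambda01 S / c"
    using measure_L[OF s] measure_L[OF assms(1)] affine_borel(2)[OF S assms(2)] by simp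
qed

definition Phi :: "real set \<Rightarrow> real set" where
  "Phi S = {x \<in> Om. tauB x \<in> S}"

definition pre :: "nat \<Rightarrow> real set \<Rightarrow> real set" where
  "pre k S = {x \<in> Om. (tauB^^k) x \<in> S}"

lemma pow_range: "x \<in> Om \<Longrightarrow> (tauB^^k) x \<in> Om"
  by (induction k) (auto dest: tauB_range)

lemma Phi_decomp:
  assumes "S \<subseteq> Om"
  shows "Phi S = ({0} \<inter> S) \<union> (\<Union>j. {x. 2^(Suc j) * x + (-1) \<in> S})"
proof (rule set_eqI, rule iffI)
  fix x assume x: "x \<in> Phi S"
  show "x \<in> ({0} \<inter> S) \<union> (\<Union>j. {x. 2^(Suc j) * x + (-1) \<in> S})"
  proof (cases "x = 0")
    case True then show ?thesis using x by (auto simp: Phi_def tauB0)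
  next
    case False
    then obtain j where j: "1 \<le> 2^(Suc j) * x" "2^j * x < 1" using cover[of x] x by (auto simp: Phi_def)
    then show ?thesis using tauB_Ij(2)[OF j] x by (auto simp: Phi_def)
  qed
next
  fix x assume x: "x \<in> ({0} \<inter> S) \<union> (\<Union>j. {x. 2^(Suc j) * x + (-1) \<in> S})"
  show "x \<in> Phi S"
  proof (cases "x \<in> {0} \<inter> S")
    case True then show ?thesis using assms by (auto simp: Phi_def tauB0)
  next
    case False
    then obtain j where j: "2^(Suc j) * x - 1 \<in> S" using x by auto
    then have a: "1 \<le> 2^(Suc j) * x" "2^(Suc j) * x < 2" using assms by auto
    then have b: "2^j * x < 1" by simp
    have "x > 0"
    proof (rule ccontr)
      assume "\<not> x > 0"
      then have "2^(Suc j) * x \<le> 0" by (simp add: mult_nonneg_nonpos)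
      then show False using a by linarith
    qed
    moreover have "x < 1"
    proof -
      have "(2::real) \<le> 2^(Suc j)" by simp
      then have "2 * x \<le> 2^(Suc j) * x" using \<open>x > 0\<close> by (intro mult_right_mono) auto
      then show ?thesis using a by linarith
    qed
    ultimately show ?thesis using tauB_Ij(2)[OF a(1) b] j by (auto simp: Phi_def)
  qed
qed

lemma Phi_sets:
  assumes "S \<in> sets lambda01"
  shows "Phi S \<in> sets lambda01"
proof -
  have S: "S \<subseteq> Om" "S \<in> sets borel" using assms sets_L by auto
  have "{x. 2^(Suc j) * x + (-1) \<in> S} \<in> sets borel" for j
    using affine_borel(1)[OF S(2), of "2^Suc j" "-1"] by simp
  then have B: "({0} \<inter> S) \<union> (\<Union>j. {x. 2^(Suc j) * x + (-1) \<in> S}) \<in> sets borel"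
    using S by (intro sets.Un sets.countable_UN sets.Int) auto
  have "Phi S \<in> sets borel" unfolding Phi_decomp[OF S(1)] by (rule B)
  moreover have "Phi S \<subseteq> Om" by (auto simp: Phi_def)
  ultimately show ?thesis unfolding sets_L by simp
qed

lemma tauB_meas: "tauB \<in> lambda01 \<rightarrow>\<^sub>M lambda01"
proof (rule measurableI)
  fix x assume "x \<in> space lambda01" then show "tauB x \<in> space lambda01"
    using tauB_range by (auto simp: space_L)
next
  fix A assume "A \<in> sets lambda01"
  moreover have "tauB -` A \<inter> space lambda01 = Phi A" by (auto simp: Phi_def space_L)
  ultimately show "tauB -` A \<inter> space lambda01 \<in> sets lambda01" using Phi_sets by simp
qed

lemma pow_meas: "(tauB^^k) \<in> lambda01 \<rightarrow>\<^sub>M lambda01"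
proof (induction k)
  case 0 then show ?case by simp
next
  case (Suc k)
  then show ?case using measurable_comp[OF Suc tauB_meas] by (simp add: comp_def)
qed

lemma pre_sets: "S \<in> sets lambda01 \<Longrightarrow> pre k S \<in> sets lambda01"
proof -
  assume S: "S \<in> sets lambda01"
  have "pre k S = (tauB^^k) -` S \<inter> space lambda01" by (auto simp: pre_def space_L)
  then show ?thesis using measurable_sets[OF pow_meas S] by simp
qed

lemma pre_Suc: "pre (Suc k) S = Phi (pre k S)"
proof (rule set_eqI)
  fix x
  have e: "(tauB^^Suc k) x = (tauB^^k) (tauB x)" by (simp only: funpow_Suc_right comp_def)
  show "x \<in> pre (Suc k) S \<longleftrightarrow> x \<in> Phi (pre k S)"
  proof (cases "x \<in> Om")
    case True
    then have "tauB x \<in> Om" using tauB_range by simp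
    then show ?thesis using True unfolding pre_def Phi_def mem_Collect_eq e by blast
  next
    case False then show ?thesis unfolding pre_def Phi_def mem_Collect_eq by blast
  qed
qed

lemma pre_0: "S \<subseteq> Om \<Longrightarrow> pre 0 S = S"
  by (auto simp: pre_def)

lemma pre_Om: "pre k Om = Om"
  using pow_range by (auto simp: pre_def)

lemma Phi_upper: assumes SO: "S \<subseteq> Om" shows "Phi S \<inter> {1/2..<1} = {x. 2 * x + (-1) \<in> S}"
proof (rule set_eqI)
  fix x :: real
  show "x \<in> Phi S \<inter> {1/2..<1} \<longleftrightarrow> x \<in> {x. 2 * x + (-1) \<in> S}"
  proof (cases "1/2 \<le> x \<and> x < 1")
    case True
    then have "tauB x = 2 * x + (-1)" using tauB_upper by simp
    then show ?thesis using True unfolding Phi_def by simp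
  next
    case False
    have "2 * x + (-1) \<notin> S"
    proof
      assume "2 * x + (-1) \<in> S"
      then have "2 * x + (-1) \<in> Om" using SO by blast
      then show False using False by simp
    qed
    then show ?thesis using False by simp
  qed
qed

lemma Phi_lower: "Phi S \<inter> {0..<1/2} = {x. 2 * x + 0 \<in> Phi S}"
proof (rule set_eqI)
  fix x :: real
  show "x \<in> Phi S \<inter> {0..<1/2} \<longleftrightarrow> x \<in> {x. 2 * x + 0 \<in> Phi S}"
  proof (cases "0 \<le> x \<and> x < 1/2")
    case True
    then have "tauB x = tauB (2 * x)" using tauB_half by blast
    then show ?thesis using True unfolding Phi_def by simp
  next
    case False
    have "x \<notin> Phi S \<inter> {0..<1/2}" using False by simp
    moreover have "\<not> (0 \<le> 2*x \<and> 2*x < 1)" using False by linarith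
    ultimately show ?thesis unfolding Phi_def mem_Collect_eq Int_iff atLeastLessThan_iff add_0_right by blast
  qed
qed

lemma invariance:
  assumes S: "S \<in> sets lambda01"
  shows "measure lambda01 (Phi S) = measure lambda01 S"
proof -
  interpret prob_space lambda01 by (rule prob_L)
  have SO: "S \<subseteq> Om" using S sets_L by auto
  have P: "Phi S \<in> sets lambda01" using Phi_sets[OF S] .
  have U: "{x. 2 * x + (-1) \<in> S} \<subseteq> Om"
  proof
    fix x assume "x \<in> {x. 2 * x + (-1) \<in> S}"
    then have "2 * x + (-1) \<in> Om" using SO by blast
    then show "x \<in> Om" by simp
  qed
  have L: "{x. 2 * x + 0 \<in> Phi S} \<subseteq> Om"
  proof
    fix x assume "x \<in> {x. 2 * x + 0 \<in> Phi S}"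
    then have "2 * x \<in> Om" unfolding Phi_def by simp
    then show "x \<in> Om" by simp
  qed
  have e: "Phi S = (Phi S \<inter> {1/2..<1}) \<union> (Phi S \<inter> {0..<1/2})" by (auto simp: Phi_def)
  have d: "(Phi S \<inter> {1/2..<1}) \<inter> (Phi S \<inter> {0..<1/2}) = {}" by auto
  have s1: "Phi S \<inter> {1/2..<1} \<in> sets lambda01" unfolding Phi_upper[OF SO] by (rule affine_L(1)[OF S _ U]) simp
  have s2: "Phi S \<inter> {0..<1/2} \<in> sets lambda01" unfolding Phi_lower by (rule affine_L(1)[OF P _ L]) simp
  have a1: "measure lambda01 {x. 2 * x + (-1) \<in> S} = measure lambda01 S / 2" by (rule affine_L(2)[OF S _ U]) simp
  have a2: "measure lambda01 {x. 2 * x + 0 \<in> Phi S} = measure lambda01 (Phi S) / 2" by (rule affine_L(2)[OF P _ L]) simp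
  have "measure lambda01 (Phi S) = measure lambda01 ((Phi S \<inter> {1/2..<1}) \<union> (Phi S \<inter> {0..<1/2}))"
    using e by (rule arg_cong)
  also have "\<dots> = measure lambda01 (Phi S \<inter> {1/2..<1}) + measure lambda01 (Phi S \<inter> {0..<1/2})"
    by (rule finite_measure_Union[OF s1 s2 d])
  also have "\<dots> = measure lambda01 S / 2 + measure lambda01 (Phi S) / 2"
    unfolding Phi_upper[OF SO] Phi_lower a1 a2 ..
  finally show ?thesis by simp
qed

lemma pre_inv: "S \<in> sets lambda01 \<Longrightarrow> measure lambda01 (pre k S) = measure lambda01 S"
proof (induction k)
  case 0 then show ?case using sets_L pre_0 by auto
next
  case (Suc k) then show ?case using invariance[OF pre_sets] pre_Suc by simp
qed

definition Dy :: "nat \<Rightarrow> nat \<Rightarrow> real set" where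
  "Dy r a = {real a / 2^r ..< (real a + 1) / 2^r}"

lemma Dy_half: "x \<in> Dy (Suc r) a \<longleftrightarrow> 2 * x + 0 \<in> Dy r a"
  unfolding Dy_def by (auto simp: field_simps)

lemma Dy_upper:
  assumes "2^r \<le> a"
  shows "x \<in> Dy (Suc r) a \<longleftrightarrow> 2 * x + (-1) \<in> Dy r (a - 2^r)"
proof -
  have e: "real (a - 2^r) = real a - 2^r" using assms by (simp add: of_nat_diff)
  show ?thesis unfolding Dy_def e by (auto simp: field_simps)
qed

lemma Dy_sub:
  assumes "a < 2^r"
  shows "Dy r a \<subseteq> Om"
proof
  fix x assume x: "x \<in> Dy r a"
  have "real a + 1 \<le> 2^r" using assms
    by (metis Suc_leI of_nat_Suc of_nat_le_iff of_nat_numeral of_nat_power add.commute)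
  then have "(real a + 1) / 2^r \<le> 1" by simp
  moreover have "0 \<le> real a / 2^r" by simp
  moreover have "real a / 2^r \<le> x" "x < (real a + 1) / 2^r" using x unfolding Dy_def by auto
  ultimately have "0 \<le> x" "x < 1" by linarith+
  then show "x \<in> Om" by simp
qed

lemma Dy_upper_sub:
  assumes "2^r \<le> a" "a < 2^(Suc r)"
  shows "Dy (Suc r) a \<subseteq> {1/2..<1}"
proof
  fix x assume x: "x \<in> Dy (Suc r) a"
  have "real a \<ge> 2^r" using assms
    by (metis of_nat_le_iff of_nat_numeral of_nat_power)
  then have "1/2 \<le> real a / 2^(Suc r)" by (simp add: field_simps)
  moreover have "x < 1" using Dy_sub[OF assms(2)] x by auto
  moreover have "real a / 2^(Suc r) \<le> x" using x unfolding Dy_def by auto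
  ultimately have "1/2 \<le> x" "x < 1" by linarith+
  then show "x \<in> {1/2..<1}" by simp
qed

lemma Dy_lower_sub:
  assumes "a < 2^r"
  shows "Dy (Suc r) a \<subseteq> {0..<1/2}"
proof
  fix x assume x: "x \<in> Dy (Suc r) a"
  then have "2 * x + 0 \<in> Dy r a" using Dy_half by blast
  then have "2 * x \<in> Om" using Dy_sub[OF assms] by auto
  then show "x \<in> {0..<1/2}" by simp
qed

lemma dyadic:
  assumes "a < 2^r" "r \<le> k" "S \<in> sets lambda01"
  shows "Dy r a \<inter> pre k S \<in> sets lambda01 \<and> measure lambda01 (Dy r a \<inter> pre k S) = measure lambda01 S / 2^r"
  using assms(1,2)
proof (induction r arbitrary: a k)
  case 0
  then have "Dy 0 a = Om" by (simp add: Dy_def)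
  moreover have "pre k S \<subseteq> Om" by (auto simp: pre_def)
  ultimately have "Dy 0 a \<inter> pre k S = pre k S" by blast
  then show ?case using pre_sets[OF assms(3)] pre_inv[OF assms(3)] by simp
next
  case (Suc r)
  obtain k' where k: "k = Suc k'" using Suc.prems by (cases k) auto
  have rk: "r \<le> k'" using Suc.prems k by simp
  define T where "T = pre k' S"
  have T: "T \<in> sets lambda01" unfolding T_def using pre_sets[OF assms(3)] .
  have TO: "T \<subseteq> Om" using T sets_L by auto
  have pk: "pre k S = Phi T" unfolding k T_def by (rule pre_Suc)
  show ?case
  proof (cases "2^r \<le> a")
    case True
    define a' where "a' = a - 2^r"
    have a': "a' < 2^r" using True Suc.prems unfolding a'_def by simp
    have IH: "Dy r a' \<inter> T \<in> sets lambda01 \<and> measure lambda01 (Dy r a' \<inter> T) = measure lambda01 S / 2^r"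
      using Suc.IH[OF a' rk] unfolding T_def .
    have eq: "Dy (Suc r) a \<inter> pre k S = {x. 2 * x + (-1) \<in> Dy r a' \<inter> T}"
    proof -
      have "Dy (Suc r) a \<inter> pre k S = Dy (Suc r) a \<inter> (Phi T \<inter> {1/2..<1})"
        using Dy_upper_sub[OF True Suc.prems(1)] pk by blast
      also have "\<dots> = Dy (Suc r) a \<inter> {x. 2 * x + (-1) \<in> T}" unfolding Phi_upper[OF TO] ..
      also have "\<dots> = {x. 2 * x + (-1) \<in> Dy r a' \<inter> T}"
        using Dy_upper[OF True] unfolding a'_def by blast
      finally show ?thesis .
    qed
    have sub: "{x. 2 * x + (-1) \<in> Dy r a' \<inter> T} \<subseteq> Om"
    proof
      fix x assume "x \<in> {x. 2 * x + (-1) \<in> Dy r a' \<inter> T}"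
      then have "2 * x + (-1) \<in> Om" using TO by blast
      then show "x \<in> Om" by simp
    qed
    show ?thesis unfolding eq using affine_L[OF conjunct1[OF IH] _ sub] IH by simp
  next
    case False
    then have a: "a < 2^r" by simp
    have IH: "Dy r a \<inter> Phi T \<in> sets lambda01 \<and> measure lambda01 (Dy r a \<inter> Phi T) = measure lambda01 S / 2^r"
      using Suc.IH[OF a] Suc.prems(2) unfolding pk[symmetric] by simp
    have eq: "Dy (Suc r) a \<inter> pre k S = {x. 2 * x + 0 \<in> Dy r a \<inter> Phi T}"
    proof -
      have "Dy (Suc r) a \<inter> pre k S = Dy (Suc r) a \<inter> (Phi T \<inter> {0..<1/2})"
        using Dy_lower_sub[OF a] pk by blast
      also have "\<dots> = Dy (Suc r) a \<inter> {x. 2 * x + 0 \<in> Phi T}" unfolding Phi_lower ..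
      also have "\<dots> = {x. 2 * x + 0 \<in> Dy r a \<inter> Phi T}"
        using Dy_half by blast
      finally show ?thesis .
    qed
    have sub: "{x. 2 * x + 0 \<in> Dy r a \<inter> Phi T} \<subseteq> Om"
    proof
      fix x assume "x \<in> {x. 2 * x + 0 \<in> Dy r a \<inter> Phi T}"
      then have "2 * x \<in> Om" unfolding Phi_def by simp
      then show "x \<in> Om" by simp
    qed
    show ?thesis unfolding eq using affine_L[OF conjunct1[OF IH] _ sub] IH by simp
  qed
qed

lemma Jint_eq:
  assumes "i < 2^m'"
  shows "Jint (Suc m') j i = {x. 2^(Suc j) * x + (-1) \<in> Dy m' (2^m' - Suc i)}"
proof -
  define p :: real where "p = 2^j"
  define q :: real where "q = 2^m'"
  have p: "p > 0" and q: "q > 0" unfolding p_def q_def by auto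
  have e0: "real (2^m' - Suc i) = q - real i - 1" unfolding q_def using assms by (simp add: of_nat_diff)
  have e1: "(1/2::real)^j = 1/p" unfolding p_def by (simp add: power_one_over)
  have e2: "(1/2::real)^(j + Suc m') = 1/(p * 2 * q)" unfolding p_def q_def by (simp add: power_add power_one_over)
  have e3: "(2::real)^(Suc j) = 2 * p" unfolding p_def by simp
  show ?thesis
  proof (rule set_eqI)
    fix x :: real
    have A: "1/p - (real i + 1) * (1/(p*2*q)) \<le> x \<longleftrightarrow> (q - real i - 1) / q \<le> 2 * p * x + (-1)"
      using p q by (simp add: field_simps)
    have B: "x < 1/p - real i * (1/(p*2*q)) \<longleftrightarrow> 2 * p * x + (-1) < (q - real i - 1 + 1) / q"
      using p q by (simp add: field_simps)
    show "x \<in> Jint (Suc m') j i \<longleftrightarrow> x \<in> {x. 2^(Suc j) * x + (-1) \<in> Dy m' (2^m' - Suc i)}"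
      unfolding Jint_def Dy_def e0 e1 e2 e3 mem_Collect_eq atLeastLessThan_iff A B
      by (simp add: q_def)
  qed
qed

lemma branch:
  assumes "2^(Suc j) * x + (-1) \<in> Om"
  shows "x \<in> Om" "tauB x = 2^(Suc j) * x + (-1)"
proof -
  have a: "1 \<le> 2^(Suc j) * x" "2^(Suc j) * x < 2" using assms by auto
  then have b: "2^j * x < 1" by simp
  show "tauB x = 2^(Suc j) * x + (-1)" using tauB_Ij(2)[OF a(1) b] by simp
  have "x > 0"
  proof (rule ccontr)
    assume "\<not> x > 0"
    then have "2^(Suc j) * x \<le> 0" by (simp add: mult_nonneg_nonpos)
    then show False using a by linarith
  qed
  moreover have "x < 1"
  proof -
    have "(2::real) \<le> 2^(Suc j)" by simp
    then have "2 * x \<le> 2^(Suc j) * x" using \<open>x > 0\<close> by (intro mult_right_mono) auto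
    then show ?thesis using a by linarith
  qed
  ultimately show "x \<in> Om" by simp
qed

lemma Jint_sub:
  assumes "i < 2^m'"
  shows "Jint (Suc m') j i \<subseteq> Om"
proof
  fix x assume "x \<in> Jint (Suc m') j i"
  then have "2^(Suc j) * x + (-1) \<in> Om" using Jint_eq[OF assms] Dy_sub[of "2^m' - Suc i" m'] assms by auto
  then show "x \<in> Om" by (rule branch)
qed

lemma gen_meas:
  assumes "i < 2^m'" "S \<in> sets lambda01"
  shows "Jint (Suc m') j i \<inter> pre (Suc m') S \<in> sets lambda01 \<and>
         measure lambda01 (Jint (Suc m') j i \<inter> pre (Suc m') S) = measure lambda01 S / 2^m' / 2^(Suc j)"
proof -
  define a where "a = 2^m' - Suc i"
  have a: "a < 2^m'" unfolding a_def using assms by simp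
  define T where "T = pre m' S"
  have pk: "pre (Suc m') S = Phi T" unfolding T_def by (rule pre_Suc)
  have DS: "Dy m' a \<subseteq> Om" by (rule Dy_sub[OF a])
  have eq: "Jint (Suc m') j i \<inter> pre (Suc m') S = {x. 2^(Suc j) * x + (-1) \<in> Dy m' a \<inter> T}"
  proof (rule set_eqI)
    fix x
    show "x \<in> Jint (Suc m') j i \<inter> pre (Suc m') S \<longleftrightarrow> x \<in> {x. 2^(Suc j) * x + (-1) \<in> Dy m' a \<inter> T}"
    proof (cases "2^(Suc j) * x + (-1) \<in> Dy m' a")
      case True
      then have y: "2^(Suc j) * x + (-1) \<in> Om" using DS by blast
      have "x \<in> Jint (Suc m') j i" using True Jint_eq[OF assms(1)] unfolding a_def by blast
      then show ?thesis unfolding pk Phi_def using branch[OF y] True by simp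
    next
      case False
      then have "x \<notin> Jint (Suc m') j i" using Jint_eq[OF assms(1)] unfolding a_def by blast
      then show ?thesis using False by simp
    qed
  qed
  have D: "Dy m' a \<inter> T \<in> sets lambda01 \<and> measure lambda01 (Dy m' a \<inter> T) = measure lambda01 S / 2^m'"
    unfolding T_def using dyadic[OF a _ assms(2)] by simp
  have sub: "{x. 2^(Suc j) * x + (-1) \<in> Dy m' a \<inter> T} \<subseteq> Om"
  proof
    fix x assume "x \<in> {x. 2^(Suc j) * x + (-1) \<in> Dy m' a \<inter> T}"
    then have "2^(Suc j) * x + (-1) \<in> Om" using DS by blast
    then show "x \<in> Om" by (rule branch)
  qed
  show ?thesis unfolding eq using affine_L[OF conjunct1[OF D] _ sub] D by simp
qed

lemma gen_prop:
  assumes "i < 2^m'" "S \<in> sets lambda01"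
  shows "Jint (Suc m') j i \<in> sets lambda01"
        "measure lambda01 (Jint (Suc m') j i \<inter> pre (Suc m') S) = measure lambda01 (Jint (Suc m') j i) * measure lambda01 S"
proof -
  interpret prob_space lambda01 by (rule prob_L)
  have Om: "Om \<in> sets lambda01" using sets.top space_L by metis
  have e: "Jint (Suc m') j i \<inter> pre (Suc m') Om = Jint (Suc m') j i"
    using Jint_sub[OF assms(1)] unfolding pre_Om by blast
  have mO: "measure lambda01 Om = 1" using prob_space space_L by simp
  have g: "Jint (Suc m') j i \<inter> pre (Suc m') Om \<in> sets lambda01 \<and> measure lambda01 (Jint (Suc m') j i \<inter> pre (Suc m') Om) = measure lambda01 Om / 2^m' / 2^(Suc j)"
    by (rule gen_meas[OF assms(1) Om])
  then have g': "Jint (Suc m') j i \<in> sets lambda01 \<and> measure lambda01 (Jint (Suc m') j i) = measure lambda01 Om / 2^m' / 2^(Suc j)"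
    unfolding e .
  show "Jint (Suc m') j i \<in> sets lambda01" using g' by blast
  have "measure lambda01 (Jint (Suc m') j i) = 1 / 2^m' / 2^(Suc j)" using g' mO by simp
  then show "measure lambda01 (Jint (Suc m') j i \<inter> pre (Suc m') S) = measure lambda01 (Jint (Suc m') j i) * measure lambda01 S"
    using gen_meas[OF assms] by simp
qed

lemma Dy_unique: "y \<in> Dy r a \<Longrightarrow> y \<in> Dy r b \<Longrightarrow> a = b"
proof -
  assume "y \<in> Dy r a" "y \<in> Dy r b"
  then have "real a / 2^r < (real b + 1) / 2^r" "real b / 2^r < (real a + 1) / 2^r" unfolding Dy_def by auto
  then have "real a < real b + 1" "real b < real a + 1" by (simp_all add: divide_strict_right_mono_neg field_simps)
  then show "a = b" by linarith
qed

lemma Jint_disj: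
  assumes "i < 2^m'" "i' < 2^m'" "x \<in> Jint (Suc m') j i" "x \<in> Jint (Suc m') j' i'"
  shows "j = j' \<and> i = i'"
proof -
  have y1: "2^(Suc j) * x + (-1) \<in> Dy m' (2^m' - Suc i)" using assms(3) Jint_eq[OF assms(1)] by blast
  have y2: "2^(Suc j') * x + (-1) \<in> Dy m' (2^m' - Suc i')" using assms(4) Jint_eq[OF assms(2)] by blast
  have o1: "2^(Suc j) * x + (-1) \<in> Om" using y1 Dy_sub[of "2^m' - Suc i" m'] assms(1) by auto
  have o2: "2^(Suc j') * x + (-1) \<in> Om" using y2 Dy_sub[of "2^m' - Suc i'" m'] assms(2) by auto
  have x0: "x > 0" using branch(1)[OF o1] o1 by (cases "x = 0") auto
  have c: "\<not> (Suc k \<le> l)" if "2^(Suc k) * x + (-1) \<in> Om" "2^(Suc l) * x + (-1) \<in> Om" for k l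
  proof
    assume "Suc k \<le> l"
    then have "(2::real)^(Suc k) \<le> 2^l" by (intro power_increasing) auto
    then have "2^(Suc k) * x \<le> 2^l * x" using x0 by (intro mult_right_mono) auto
    moreover have "1 \<le> 2^(Suc k) * x" using that(1) by simp
    moreover have "2^(Suc l) * x < 2" using that(2) by simp
    ultimately show False by simp
  qed
  have jj: "j = j'" using c[OF o1 o2] c[OF o2 o1] by simp
  then have "2^m' - Suc i = 2^m' - Suc i'" using Dy_unique y1 y2 by simp
  then show ?thesis using jj assms(1,2) by simp
qed

definition GG :: "nat \<Rightarrow> real set set" where
  "GG m' = {Jint (Suc m') j i | j i. i < 2^m'}"

lemma GG_sub: "GG m' \<subseteq> Pow Om"
  unfolding GG_def using Jint_sub by blast

lemma Jalg_sets: "sets (Jalg (Suc m')) = sigma_sets Om (GG m')"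
  unfolding Jalg_def GG_def using GG_sub[of m'] unfolding GG_def by (simp add: sets_measure_of)

lemma Jalg_space: "space (Jalg (Suc m')) = Om"
  unfolding Jalg_def using GG_sub[of m'] unfolding GG_def by (simp add: space_measure_of)

lemma Jalg_prop:
  assumes "A \<in> sets (Jalg (Suc m'))"
  shows "A \<in> sets lambda01 \<and> (\<forall>S\<in>sets lambda01. measure lambda01 (A \<inter> pre (Suc m') S) = measure lambda01 A * measure lambda01 S)"
proof -
  interpret prob_space lambda01 by (rule prob_L)
  let ?G = "insert {} (GG m')"
  have sub: "sigma_sets Om (GG m') \<subseteq> sigma_sets Om ?G" by (rule sigma_sets_subseteq) (rule subset_insertI)
  have A: "A \<in> sigma_sets Om ?G"
    using sub assms[unfolded Jalg_sets] by (rule subsetD)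
  have IS: "Int_stable ?G"
  proof (rule Int_stableI)
    fix a b assume a: "a \<in> ?G" and b: "b \<in> ?G"
    show "a \<inter> b \<in> ?G"
    proof (cases "a \<inter> b = {}")
      case True then show ?thesis by simp
    next
      case False
      then obtain x where x: "x \<in> a" "x \<in> b" by blast
      then have "a \<noteq> {}" "b \<noteq> {}" by auto
      then obtain j i j' i' where "a = Jint (Suc m') j i" "i < 2^m'" "b = Jint (Suc m') j' i'" "i' < 2^m'"
        using a b unfolding GG_def by auto
      with Jint_disj x have "a = b" by metis
      then show ?thesis using a by simp
    qed
  qed
  have Gsub: "?G \<subseteq> Pow Om" using GG_sub by auto
  have Om: "Om \<in> sets lambda01" using sets.top space_L by metis
  show ?thesis using IS Gsub A
  proof (induction rule: sigma_sets_induct_disjoint)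
    case (basic A)
    show ?case
    proof (cases "A = {}")
      case True then show ?thesis by simp
    next
      case False
      then obtain j i where Aj: "A = Jint (Suc m') j i" and i: "i < 2^m'" using basic unfolding GG_def by auto
      have "A \<in> sets lambda01" unfolding Aj by (rule gen_prop(1)[OF i Om])
      moreover have "\<forall>S\<in>sets lambda01. measure lambda01 (A \<inter> pre (Suc m') S) = measure lambda01 A * measure lambda01 S"
        unfolding Aj using gen_prop(2)[OF i] by blast
      ultimately show ?thesis by blast
    qed
  next
    case empty then show ?case by simp
  next
    case (compl A)
    have As: "A \<in> sets lambda01" using compl.IH by blast
    have cs: "Om - A \<in> sets lambda01" using As Om by auto
    have "measure lambda01 ((Om - A) \<inter> pre (Suc m') S) = measure lambda01 (Om - A) * measure lambda01 S"
      if S: "S \<in> sets lambda01" for S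
    proof -
      have P: "pre (Suc m') S \<in> sets lambda01" using pre_sets[OF S] .
      have PO: "pre (Suc m') S \<subseteq> Om" by (auto simp: pre_def)
      have e: "(Om - A) \<inter> pre (Suc m') S = pre (Suc m') S - (A \<inter> pre (Suc m') S)" using PO by blast
      have "measure lambda01 ((Om - A) \<inter> pre (Suc m') S) = measure lambda01 (pre (Suc m') S) - measure lambda01 (A \<inter> pre (Suc m') S)"
        unfolding e using P As by (intro finite_measure_Diff) auto
      also have "\<dots> = measure lambda01 S - measure lambda01 A * measure lambda01 S"
        using pre_inv[OF S] compl.IH S by simp
      also have "\<dots> = (1 - measure lambda01 A) * measure lambda01 S" by (simp add: algebra_simps)
      also have "1 - measure lambda01 A = measure lambda01 (Om - A)"
        using prob_compl[OF As] space_L by simp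
      finally show ?thesis .
    qed
    then show ?case using cs by blast
  next
    case (union F)
    have Fs: "\<And>i. F i \<in> sets lambda01" using union.IH by blast
    have Us: "(\<Union>i. F i) \<in> sets lambda01" by (rule sets.countable_UN) (use Fs in blast)
    have "measure lambda01 ((\<Union>i. F i) \<inter> pre (Suc m') S) = measure lambda01 (\<Union>i. F i) * measure lambda01 S"
      if S: "S \<in> sets lambda01" for S
    proof -
      have P: "pre (Suc m') S \<in> sets lambda01" using pre_sets[OF S] .
      have dj: "disjoint_family (\<lambda>i. F i \<inter> pre (Suc m') S)"
        using union.hyps(1) unfolding disjoint_family_on_def by blast
      have r1: "range (\<lambda>i. F i \<inter> pre (Suc m') S) \<subseteq> sets lambda01" using Fs P by blast
      have r2: "range F \<subseteq> sets lambda01" using Fs by blast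
      have s1: "(\<lambda>i. measure lambda01 (F i \<inter> pre (Suc m') S)) sums measure lambda01 (\<Union>i. F i \<inter> pre (Suc m') S)"
        by (rule finite_measure_UNION[OF r1 dj])
      have s2: "(\<lambda>i. measure lambda01 (F i)) sums measure lambda01 (\<Union>i. F i)"
        by (rule finite_measure_UNION[OF r2 union.hyps(1)])
      have s3: "(\<lambda>i. measure lambda01 (F i) * measure lambda01 S) sums (measure lambda01 (\<Union>i. F i) * measure lambda01 S)"
        by (rule sums_mult2[OF s2])
      have "(\<lambda>i. measure lambda01 (F i \<inter> pre (Suc m') S)) = (\<lambda>i. measure lambda01 (F i) * measure lambda01 S)"
        using union.IH S by blast
      then have R: "measure lambda01 (\<Union>i. F i \<inter> pre (Suc m') S) = measure lambda01 (\<Union>i. F i) * measure lambda01 S"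
        using s1 s3 sums_unique2 by simp
      have e: "(\<Union>i. F i) \<inter> pre (Suc m') S = (\<Union>i. F i \<inter> pre (Suc m') S)" by blast
      show ?thesis unfolding e by (rule R)
    qed
    then show ?case using Us by blast
  qed
qed

lemma fp_add: "(tauB^^(a + b)) x = (tauB^^b) ((tauB^^a) x)"
proof -
  have "a + b = b + a" by simp
  then show ?thesis by (simp only: funpow_add o_apply)
qed

lemma core:
  "(\<And>n. n < N \<Longrightarrow> S n \<in> sets (Jalg (Suc m'))) \<Longrightarrow>
   Om \<inter> (\<Inter>n\<in>{..<N}. pre (n * Suc m') (S n)) \<in> sets lambda01 \<and>
   measure lambda01 (Om \<inter> (\<Inter>n\<in>{..<N}. pre (n * Suc m') (S n))) = (\<Prod>n<N. measure lambda01 (S n))"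
proof (induction N arbitrary: S)
  case 0
  interpret prob_space lambda01 by (rule prob_L)
  have Om: "Om \<in> sets lambda01" using sets.top space_L by metis
  show ?case using Om prob_space space_L by simp
next
  case (Suc N)
  let ?M = "Suc m'"
  define R where "R = Om \<inter> (\<Inter>n\<in>{..<N}. pre (n * ?M) (S (Suc n)))"
  have IH: "R \<in> sets lambda01 \<and> measure lambda01 R = (\<Prod>n<N. measure lambda01 (S (Suc n)))"
    unfolding R_def using Suc.IH[of "\<lambda>n. S (Suc n)"] Suc.prems by simp
  have S0: "S 0 \<in> sets (Jalg ?M)" using Suc.prems by simp
  note J0 = Jalg_prop[OF S0]
  have S0O: "S 0 \<subseteq> Om" using J0 sets_L by blast
  have fp: "(tauB^^(n * ?M)) ((tauB^^?M) x) = (tauB^^(Suc n * ?M)) x" for n x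
  proof -
    have e: "Suc n * ?M = ?M + n * ?M" by (simp only: mult_Suc)
    show ?thesis unfolding e by (rule fp_add[symmetric])
  qed
  have eq: "Om \<inter> (\<Inter>n\<in>{..<Suc N}. pre (n * ?M) (S n)) = S 0 \<inter> pre ?M R"
  proof (rule set_eqI, rule iffI)
    fix x assume x: "x \<in> Om \<inter> (\<Inter>n\<in>{..<Suc N}. pre (n * ?M) (S n))"
    then have xO: "x \<in> Om" by blast
    have all: "(tauB^^(n * ?M)) x \<in> S n" if "n < Suc N" for n using x that unfolding pre_def by blast
    have "x \<in> S 0" using all[of 0] by simp
    moreover have "(tauB^^?M) x \<in> R"
    proof -
      have "(tauB^^?M) x \<in> Om" using pow_range[OF xO] .
      moreover have "(tauB^^?M) x \<in> pre (n * ?M) (S (Suc n))" if "n < N" for n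
      proof -
        have b: "(tauB^^(n * ?M)) ((tauB^^?M) x) \<in> S (Suc n)"
          unfolding fp by (rule all[of "Suc n", OF Suc_mono[OF that]])
        show ?thesis unfolding pre_def using pow_range[OF xO] b by blast
      qed
      ultimately show ?thesis unfolding R_def by blast
    qed
    ultimately show "x \<in> S 0 \<inter> pre ?M R" using xO unfolding pre_def by blast
  next
    fix x assume x: "x \<in> S 0 \<inter> pre ?M R"
    then have xO: "x \<in> Om" and x0: "x \<in> S 0" and y: "(tauB^^?M) x \<in> R" unfolding pre_def by auto
    have "x \<in> pre (n * ?M) (S n)" if "n < Suc N" for n
    proof (cases n)
      case 0 then show ?thesis using xO x0 unfolding pre_def by simp
    next
      case (Suc n')
      then have "n' < N" using that by simp
      then have "(tauB^^?M) x \<in> pre (n' * ?M) (S (Suc n'))" using y unfolding R_def by blast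
      then have "(tauB^^(Suc n' * ?M)) x \<in> S (Suc n')" unfolding pre_def mem_Collect_eq fp by blast
      then show ?thesis using xO unfolding Suc pre_def by blast
    qed
    then show "x \<in> Om \<inter> (\<Inter>n\<in>{..<Suc N}. pre (n * ?M) (S n))" using xO by blast
  qed
  have "S 0 \<inter> pre ?M R \<in> sets lambda01" using J0 pre_sets[OF conjunct1[OF IH]] by blast
  moreover have "measure lambda01 (S 0 \<inter> pre ?M R) = measure lambda01 (S 0) * measure lambda01 R"
    using J0 IH by blast
  ultimately show ?case unfolding eq prod.lessThan_Suc_shift using IH by simp
qed

lemma pre_vimage: "(tauB^^j) -` A \<inter> space lambda01 = pre j A"
  by (auto simp: pre_def space_L)

lemma T_meas: "(tauB^^j) \<in> lambda01 \<rightarrow>\<^sub>M Jalg (Suc m')"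
proof (rule measurableI)
  fix x assume "x \<in> space lambda01"
  then show "(tauB^^j) x \<in> space (Jalg (Suc m'))" using pow_range by (simp add: space_L Jalg_space)
next
  fix A assume "A \<in> sets (Jalg (Suc m'))"
  then have "A \<in> sets lambda01" using Jalg_prop by blast
  then show "(tauB^^j) -` A \<inter> space lambda01 \<in> sets lambda01" unfolding pre_vimage by (rule pre_sets)
qed

theorem mainTheorem9:
  fixes m :: nat and u :: nat and \<nu> :: "nat \<Rightarrow> real \<Rightarrow> real"
  assumes "m \<ge> 1"
    and "\<And>n. n \<ge> 1 \<Longrightarrow> \<nu> n \<in> borel_measurable (Jalg m)"
  shows "prob_space.indep_vars lambda01 (\<lambda>_. borel)
           (\<lambda>n x. \<nu> n ((tauB ^^ (u + (n - 1) * m)) x)) {1..}"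
proof -
  obtain m' where m: "m = Suc m'" using assms(1) by (cases m) auto
  interpret P: prob_space lambda01 by (rule prob_L)
  define X where "X = (\<lambda>n x. \<nu> n ((tauB ^^ (u + (n - 1) * m)) x))"
  have Xm: "X n \<in> borel_measurable lambda01" if "n \<ge> 1" for n
    unfolding X_def using measurable_compose[OF T_meas[of _ m'] assms(2)[OF that, unfolded m]] m by simp
  have Om: "Om \<in> sets lambda01" using sets.top space_L by metis
  have mOm: "measure lambda01 Om = 1" using P.prob_space space_L by simp
  have JOm: "Om \<in> sets (Jalg m)" using sets.top Jalg_space m by metis
  have main: "measure lambda01 (\<Inter>j\<in>J. A j) = (\<Prod>j\<in>J. measure lambda01 (A j))"
    if J: "J \<subseteq> {1..}" "J \<noteq> {}" "finite J"
    and A: "A \<in> (\<Pi> i\<in>J. {X i -` B \<inter> space lambda01 |B. B \<in> sets borel})" for J A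
  proof -
    have "\<forall>j\<in>J. \<exists>B. B \<in> sets borel \<and> A j = X j -` B \<inter> space lambda01" using A by blast
    then obtain B where B: "\<And>j. j \<in> J \<Longrightarrow> B j \<in> sets borel \<and> A j = X j -` B j \<inter> space lambda01"
      by metis
    define T where "T j = \<nu> j -` B j \<inter> Om" for j
    define k where "k j = u + (j - 1) * m" for j
    have TJ: "T j \<in> sets (Jalg m)" if "j \<in> J" for j
    proof -
      have "j \<ge> 1" using J that by auto
      then have "\<nu> j -` B j \<inter> space (Jalg m) \<in> sets (Jalg m)"
        using measurable_sets[OF assms(2) conjunct1[OF B[OF that]]] by blast
      then show ?thesis unfolding T_def using Jalg_space m by simp
    qed
    have TL: "T j \<in> sets lambda01" if "j \<in> J" for j using Jalg_prop TJ[OF that] m by blast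
    have Aj: "A j = pre (k j) (T j)" if "j \<in> J" for j
    proof -
      have "A j = X j -` B j \<inter> space lambda01" using B[OF that] by blast
      then show ?thesis unfolding X_def k_def T_def pre_def space_L using pow_range by auto
    qed
    define N where "N = Max J"
    have jN: "1 \<le> j \<and> j \<le> N" if "j \<in> J" for j using J that unfolding N_def by auto
    define S where "S n = (if Suc n \<in> J then T (Suc n) else Om)" for n
    have SJ: "S n \<in> sets (Jalg (Suc m'))" for n unfolding S_def using TJ JOm m by auto
    define R where "R = Om \<inter> (\<Inter>n\<in>{..<N}. pre (n * Suc m') (S n))"
    have C: "R \<in> sets lambda01 \<and> measure lambda01 R = (\<Prod>n<N. measure lambda01 (S n))"
      unfolding R_def by (rule core) (rule SJ)
    have fp: "(tauB^^(k (Suc n))) x = (tauB^^(n * m)) ((tauB^^u) x)" for n x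
      unfolding k_def using fp_add[of u "n * m" x] by simp
    have eq: "(\<Inter>j\<in>J. A j) = pre u R"
    proof (rule set_eqI, rule iffI)
      fix x assume x: "x \<in> (\<Inter>j\<in>J. A j)"
      have xj: "x \<in> pre (k j) (T j)" if "j \<in> J" for j using x that Aj by blast
      obtain j0 where "j0 \<in> J" using J by blast
      then have xO: "x \<in> Om" using xj unfolding pre_def by blast
      have yO: "(tauB^^u) x \<in> Om" by (rule pow_range[OF xO])
      have "(tauB^^u) x \<in> pre (n * Suc m') (S n)" if "n < N" for n
      proof (cases "Suc n \<in> J")
        case True
        have "(tauB^^(k (Suc n))) x \<in> T (Suc n)" using xj[OF True] unfolding pre_def by blast
        then show ?thesis using True yO unfolding pre_def S_def fp m by simp
      next
        case False
        then show ?thesis using yO pow_range[OF yO] unfolding pre_def S_def by simp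
      qed
      then have "(tauB^^u) x \<in> R" unfolding R_def using yO by blast
      then show "x \<in> pre u R" unfolding pre_def using xO by blast
    next
      fix x assume x: "x \<in> pre u R"
      then have xO: "x \<in> Om" and y: "(tauB^^u) x \<in> R" unfolding pre_def by auto
      have "x \<in> A j" if j: "j \<in> J" for j
      proof -
        obtain n where n: "j = Suc n" using jN[OF j] by (cases j) auto
        have "n < N" using jN[OF j] n by simp
        then have "(tauB^^u) x \<in> pre (n * Suc m') (S n)" using y unfolding R_def by blast
        then have "(tauB^^(n * m)) ((tauB^^u) x) \<in> T (Suc n)"
          unfolding pre_def S_def m using j n by simp
        then have "(tauB^^(k j)) x \<in> T j" unfolding n fp .
        then show ?thesis using Aj[OF j] xO unfolding pre_def by blast
      qed
      then show "x \<in> (\<Inter>j\<in>J. A j)" by blast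
    qed
    have lhs: "measure lambda01 (\<Inter>j\<in>J. A j) = (\<Prod>n<N. measure lambda01 (S n))"
      unfolding eq using pre_inv C by simp
    have rhs: "(\<Prod>j\<in>J. measure lambda01 (A j)) = (\<Prod>j\<in>J. measure lambda01 (T j))"
      using Aj pre_inv TL by (intro prod.cong) auto
    have "(\<Prod>n<N. measure lambda01 (S n)) = (\<Prod>n<N. if Suc n \<in> J then measure lambda01 (T (Suc n)) else 1)"
      unfolding S_def using mOm by (intro prod.cong) auto
    also have "\<dots> = (\<Prod>n\<in>{n\<in>{..<N}. Suc n \<in> J}. measure lambda01 (T (Suc n)))"
      by (rule prod.inter_filter[symmetric]) simp
    also have "\<dots> = (\<Prod>j\<in>Suc ` {n\<in>{..<N}. Suc n \<in> J}. measure lambda01 (T j))"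
      by (rule prod.reindex[symmetric, unfolded comp_def]) simp
    also have "Suc ` {n\<in>{..<N}. Suc n \<in> J} = J"
    proof (rule set_eqI, rule iffI)
      fix j assume "j \<in> Suc ` {n\<in>{..<N}. Suc n \<in> J}" then show "j \<in> J" by auto
    next
      fix j assume j: "j \<in> J"
      then obtain n where n: "j = Suc n" using jN[OF j] by (cases j) auto
      then have "n \<in> {n\<in>{..<N}. Suc n \<in> J}" using jN[OF j] j by auto
      then show "j \<in> Suc ` {n\<in>{..<N}. Suc n \<in> J}" using n by blast
    qed
    finally show ?thesis using lhs rhs by simp
  qed
  show ?thesis
    unfolding P.indep_vars_def2 P.indep_sets_def X_def[symmetric]
  proof (intro conjI ballI allI impI)
    fix i :: nat assume "i \<in> {1..}"
    then show "P.random_variable borel (X i)" using Xm by simp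
  next
    fix i :: nat assume "i \<in> {1..}"
    then show "{X i -` A \<inter> space lambda01 |A. A \<in> sets borel} \<subseteq> P.events"
      using Xm measurable_sets by fastforce
  next
    fix J A assume "J \<subseteq> {1..}" "J \<noteq> {}" "finite J"
      "A \<in> (\<Pi> i\<in>J. {X i -` B \<inter> space lambda01 |B. B \<in> sets borel})"
    then show "P.prob (\<Inter> (A ` J)) = (\<Prod>j\<in>J. P.prob (A j))" using main by blast
  qed
qed

end
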